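(* Let $S$ be an instance of Max $r(n)$-Lin-2 AA with parameter $k$, in $n$ variables, in which no two equations have the same left-hand side (i.e. $\alpha_j\neq\alpha_p$ for all $j\neq p$). If $n\ge 2^{k}\,r(n)$, then $S$ is a YES-instance.
   Context: Max $r(n)$-Lin-2 AA: for a fixed function $r(n)$, an instance is a system $S$ of $m$ linear equations over $\mathbb{F}_2$ in variables $z_1,\dots,z_n$, Equation $j$ being $\sum_{i\in\alpha_j} z_i=b_j$ with $\emptyset\neq\alpha_j\subseteq\{1,\dots,n\}$, $|\alpha_j|\le r=r(n)$, $b_j\in\mathbb{F}_2$, and a positive integer weight $w_j$; together with a nonnegative integer parameter $k$. It is assumed that every variable appears in at least one equation. Let $W=w_1+\cdots+w_m$. The instance is a YES-instance if some assignment satisfies equations of total weight at least $(W+k)/2$. *)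

theory Defs
  imports Complex_Main
begin

text \<open>An equation sum_{i in alpha} z_i = b over GF(2); an assignment is z :: nat => bool
  (True = 1), b :: bool.\<close>
definition eq_sat :: "(nat \<Rightarrow> bool) \<Rightarrow> nat set \<Rightarrow> bool \<Rightarrow> bool" where
  "eq_sat z \<alpha> b \<longleftrightarrow> (odd (card {i \<in> \<alpha>. z i}) \<longleftrightarrow> b)"

definition sat_weight :: "nat \<Rightarrow> (nat \<Rightarrow> nat set) \<Rightarrow> (nat \<Rightarrow> bool) \<Rightarrow> (nat \<Rightarrow> nat)
    \<Rightarrow> (nat \<Rightarrow> bool) \<Rightarrow> nat" where
  "sat_weight m \<alpha> b w z = (\<Sum>j\<in>{j. j < m \<and> eq_sat z (\<alpha> j) (b j)}. w j)"

definition lin2_instance :: "(nat \<Rightarrow> nat) \<Rightarrow> nat \<Rightarrow> nat \<Rightarrow> (nat \<Rightarrow> nat set)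
    \<Rightarrow> (nat \<Rightarrow> nat) \<Rightarrow> bool" where
  "lin2_instance r n m \<alpha> w \<longleftrightarrow>
     (\<forall>j<m. \<alpha> j \<noteq> {} \<and> \<alpha> j \<subseteq> {1..n} \<and> card (\<alpha> j) \<le> r n \<and> 0 < w j) \<and>
     (\<forall>i\<in>{1..n}. \<exists>j<m. i \<in> \<alpha> j)"

definition yes_instance :: "nat \<Rightarrow> (nat \<Rightarrow> nat set) \<Rightarrow> (nat \<Rightarrow> bool) \<Rightarrow> (nat \<Rightarrow> nat)
    \<Rightarrow> nat \<Rightarrow> bool" where
  "yes_instance m \<alpha> b w k \<longleftrightarrow>
     (\<exists>z. real (sat_weight m \<alpha> b w z) \<ge> (real (\<Sum>j<m. w j) + real k) / 2)"

end

theory Submission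
  imports Defs
begin

definition sd :: "nat set \<Rightarrow> nat set \<Rightarrow> nat set" where
  "sd X Y = (X - Y) \<union> (Y - X)"

definition chi :: "nat set \<Rightarrow> nat set \<Rightarrow> int" where
  "chi S A = (-1) ^ card (S \<inter> A)"

definition fv :: "nat set \<Rightarrow> (nat set \<Rightarrow> int) \<Rightarrow> nat set \<Rightarrow> int" where
  "fv V c A = (\<Sum>S\<in>Pow V. c S * chi S A)"

definition wfc :: "nat set \<Rightarrow> nat \<Rightarrow> (nat set \<Rightarrow> int) \<Rightarrow> bool" where
  "wfc V R c \<longleftrightarrow> (\<forall>S. c S \<noteq> 0 \<longrightarrow> S \<subseteq> V \<and> S \<noteq> {} \<and> card S \<le> R)"

definition cov :: "(nat set \<Rightarrow> int) \<Rightarrow> nat set" where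
  "cov c = {y. \<exists>S. c S \<noteq> 0 \<and> y \<in> S}"

lemma card_sd:
  assumes "finite X" "finite Y"
  shows "card (sd X Y) + 2 * card (X \<inter> Y) = card X + card Y"
proof -
  have "sd X Y = (X \<union> Y) - (X \<inter> Y)" unfolding sd_def by auto
  hence "card (sd X Y) = card (X \<union> Y) - card (X \<inter> Y)"
    using assms by (metis Int_lower1 card_Diff_subset finite_Int le_supI1)
  moreover have "card (X \<inter> Y) \<le> card (X \<union> Y)" using assms by (intro card_mono) auto
  moreover have "card X + card Y = card (X \<union> Y) + card (X \<inter> Y)"
    using card_Un_Int assms by blast
  ultimately show ?thesis by linarith
qed

lemma pow_sd:
  assumes "finite X" "finite Y"
  shows "(-1::int) ^ card (sd X Y) = (-1) ^ card X * (-1) ^ card Y"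
proof -
  have "(-1::int) ^ (card (sd X Y) + 2 * card (X \<inter> Y)) = (-1) ^ (card X + card Y)"
    using card_sd[OF assms] by simp
  thus ?thesis by (simp add: power_add power_mult)
qed

lemma chi_sd1:
  assumes "finite X" "finite Y"
  shows "chi (sd X Y) A = chi X A * chi Y A"
proof -
  have "sd X Y \<inter> A = sd (X \<inter> A) (Y \<inter> A)" unfolding sd_def by auto
  thus ?thesis unfolding chi_def using pow_sd assms by simp
qed

lemma chi_sd2:
  assumes "finite S"
  shows "chi S (sd X Y) = chi S X * chi S Y"
proof -
  have "S \<inter> sd X Y = sd (S \<inter> X) (S \<inter> Y)" unfolding sd_def by auto
  thus ?thesis unfolding chi_def using pow_sd assms by simp
qed

lemma chi_pm: "chi S A = 1 \<or> chi S A = -1"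
  unfolding chi_def by (cases "even (card (S \<inter> A))") auto

lemma sd_sd: "sd (sd X Y) Y = X" unfolding sd_def by auto

lemma chisum:
  assumes "finite V" "S \<subseteq> V" "S \<noteq> {}"
  shows "(\<Sum>A\<in>Pow V. chi S A) = 0"
proof -
  obtain i where i: "i \<in> S" using assms by auto
  define V0 where "V0 = V - {i}"
  have V: "V = insert i V0" "i \<notin> V0" using i assms unfolding V0_def by auto
  have fin: "finite (Pow V0)" using assms V0_def by simp
  have "(\<Sum>A\<in>Pow V. chi S A) = (\<Sum>A\<in>Pow V0. chi S A) + (\<Sum>A\<in>insert i ` Pow V0. chi S A)"
    unfolding V(1) Pow_insert using V fin by (intro sum.union_disjoint) auto
  also have "(\<Sum>A\<in>insert i ` Pow V0. chi S A) = (\<Sum>A\<in>Pow V0. chi S (insert i A))"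
  proof (rule sum.reindex[unfolded comp_def])
    show "inj_on (insert i) (Pow V0)" using V unfolding inj_on_def
      by (metis Pow_iff insert_ident subset_iff)
  qed
  also have "\<dots> = (\<Sum>A\<in>Pow V0. - chi S A)"
  proof (rule sum.cong[OF refl])
    fix A assume "A \<in> Pow V0"
    hence "S \<inter> insert i A = insert i (S \<inter> A)" "i \<notin> S \<inter> A" using i V by auto
    moreover have "finite (S \<inter> A)" using assms by (meson finite_Int finite_subset)
    ultimately show "chi S (insert i A) = - chi S A" unfolding chi_def by simp
  qed
  finally show ?thesis by (simp add: sum_negf)
qed

lemma mean_zero:
  assumes "finite V" "wfc V R c"
  shows "\<exists>A\<subseteq>V. 0 \<le> fv V c A"
proof (rule ccontr)
  assume "\<not> ?thesis"
  hence neg: "\<forall>A\<in>Pow V. fv V c A < 0" by auto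
  have "(\<Sum>A\<in>Pow V. fv V c A) = (\<Sum>S\<in>Pow V. c S * (\<Sum>A\<in>Pow V. chi S A))"
    unfolding fv_def by (subst sum.swap) (simp add: sum_distrib_left)
  also have "\<dots> = 0"
  proof (rule sum.neutral, rule ballI)
    fix S assume "S \<in> Pow V"
    show "c S * (\<Sum>A\<in>Pow V. chi S A) = 0"
    proof (cases "c S = 0")
      case False thus ?thesis using assms chisum unfolding wfc_def by auto
    qed simp
  qed
  finally have "(\<Sum>A\<in>Pow V. fv V c A) = 0" .
  moreover have "(\<Sum>A\<in>Pow V. fv V c A) < 0"
  proof -
    have "(\<Sum>A\<in>Pow V. fv V c A) < (\<Sum>A\<in>Pow V. 0)"
      using neg assms(1) by (intro sum_strict_mono) auto
    thus ?thesis by simp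
  qed
  ultimately show False by simp
qed

lemma gain_part:
  assumes fin: "finite V" and wf: "wfc V R c" and S1: "S1 \<subseteq> V" "p \<in> S1"
    and sig: "\<sigma> = 1 \<or> \<sigma> = -1"
    and c'_def: "c' = (\<lambda>T. if p \<in> T \<or> T = {} then 0 else c T + \<sigma> * c (sd T S1))"
    and A: "A \<subseteq> V" and chiA: "chi S1 A = \<sigma>"
  shows "fv V c A = \<sigma> * c S1 + fv V c' A"
proof -
  have finS1: "finite S1" using S1 fin finite_subset by blast
  define P0 where "P0 = {T\<in>Pow V. p \<notin> T}"
  define P1 where "P1 = {T\<in>Pow V. p \<in> T}"
  have fP0: "finite P0" "finite P1" using fin unfolding P0_def P1_def by auto
  have "fv V c A = (\<Sum>S\<in>P0. c S * chi S A) + (\<Sum>S\<in>P1. c S * chi S A)"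
  proof -
    have "Pow V = P0 \<union> P1" "P0 \<inter> P1 = {}" unfolding P0_def P1_def by auto
    thus ?thesis unfolding fv_def using fP0 by (simp add: sum.union_disjoint)
  qed
  also have "(\<Sum>S\<in>P1. c S * chi S A) = (\<Sum>T\<in>P0. c (sd T S1) * chi (sd T S1) A)"
  proof -
    have img: "P1 = (\<lambda>T. sd T S1) ` P0"
    proof
      show "P1 \<subseteq> (\<lambda>T. sd T S1) ` P0"
      proof
        fix S assume "S \<in> P1"
        hence "sd S S1 \<in> P0" "sd (sd S S1) S1 = S"
          using S1 unfolding P0_def P1_def sd_def by auto
        thus "S \<in> (\<lambda>T. sd T S1) ` P0" by (metis image_eqI)
      qed
      show "(\<lambda>T. sd T S1) ` P0 \<subseteq> P1" using S1 unfolding P0_def P1_def sd_def by auto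
    qed
    have inj: "inj_on (\<lambda>T. sd T S1) P0" by (metis inj_onI sd_sd)
    show ?thesis unfolding img using sum.reindex[OF inj] by (simp add: comp_def)
  qed
  also have "\<dots> = (\<Sum>T\<in>P0. \<sigma> * c (sd T S1) * chi T A)"
  proof (rule sum.cong[OF refl])
    fix T assume "T \<in> P0"
    hence "finite T" using fin unfolding P0_def by (auto intro: finite_subset)
    thus "c (sd T S1) * chi (sd T S1) A = \<sigma> * c (sd T S1) * chi T A"
      using chi_sd1[OF _ finS1] chiA by simp
  qed
  also have "(\<Sum>S\<in>P0. c S * chi S A) + \<dots> = (\<Sum>T\<in>P0. (c T + \<sigma> * c (sd T S1)) * chi T A)"
    by (simp add: sum.distrib[symmetric] algebra_simps)
  also have "\<dots> = \<sigma> * c S1 + (\<Sum>T\<in>P0 - {{}}. c' T * chi T A)"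
  proof -
    have e: "{} \<in> P0" unfolding P0_def by auto
    have "c {} = 0" using wf unfolding wfc_def by auto
    hence t0: "(c {} + \<sigma> * c (sd {} S1)) * chi {} A = \<sigma> * c S1"
      unfolding sd_def chi_def by simp
    have "(\<Sum>T\<in>P0. (c T + \<sigma> * c (sd T S1)) * chi T A)
        = (c {} + \<sigma> * c (sd {} S1)) * chi {} A + (\<Sum>T\<in>P0 - {{}}. (c T + \<sigma> * c (sd T S1)) * chi T A)"
      using sum.remove[OF fP0(1) e] by simp
    also have "(\<Sum>T\<in>P0 - {{}}. (c T + \<sigma> * c (sd T S1)) * chi T A) = (\<Sum>T\<in>P0 - {{}}. c' T * chi T A)"
      by (rule sum.cong) (auto simp: c'_def P0_def)
    finally show ?thesis using t0 by simp
  qed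
  also have "(\<Sum>T\<in>P0 - {{}}. c' T * chi T A) = fv V c' A"
    unfolding fv_def
    by (rule sum.mono_neutral_left) (use fin in \<open>auto simp: P0_def c'_def\<close>)
  finally show ?thesis .
qed

lemma step:
  assumes fin: "finite V" and wf: "wfc V R c" and ne: "cov c \<noteq> {}"
  shows "\<exists>c'. wfc V (2*R) c' \<and> card (cov c) \<le> card (cov c') + 2*R \<and>
              (\<forall>A'\<subseteq>V. \<exists>A\<subseteq>V. fv V c' A' + 1 \<le> fv V c A)"
proof -
  define F where "F = {S. c S \<noteq> 0}"
  have FP: "F \<subseteq> Pow V" using wf unfolding F_def wfc_def by auto
  have finF: "finite F" using FP fin by (meson finite_Pow_iff finite_subset)
  have covV: "cov c \<subseteq> V" using wf unfolding cov_def wfc_def by auto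
  define deg where "deg y = card {S\<in>F. y \<in> S}" for y
  obtain p where p: "p \<in> cov c" "\<forall>y. y \<in> cov c \<longrightarrow> deg p \<le> deg y"
    using ex_has_least_nat[of "\<lambda>y. y \<in> cov c"] ne by blast
  define Fp where "Fp = {S\<in>F. p \<in> S}"
  have finFp: "finite Fp" using finF unfolding Fp_def by simp
  have Fpne: "Fp \<noteq> {}" using p(1) unfolding Fp_def F_def cov_def by auto
  obtain S0 where S0: "S0 \<in> Fp" using Fpne by auto
  have bdd: "\<forall>S. S \<in> Fp \<longrightarrow> card S < Suc R"
    using wf unfolding Fp_def F_def wfc_def by (simp add: less_Suc_eq_le)
  obtain S1 where S1: "S1 \<in> Fp" "\<forall>S. S \<in> Fp \<longrightarrow> card S \<le> card S1"
    using ex_has_greatest_nat[of "\<lambda>S. S \<in> Fp", OF S0 bdd] by blast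
  have S1F: "c S1 \<noteq> 0" "p \<in> S1" using S1 unfolding Fp_def F_def by auto
  have S1V: "S1 \<subseteq> V" "card S1 \<le> R" using wf S1F unfolding wfc_def by auto
  have finS1: "finite S1" using S1V fin finite_subset by blast
  define \<sigma> where "\<sigma> = (if c S1 > 0 then 1 else -1 :: int)"
  have sig: "\<sigma> = 1 \<or> \<sigma> = -1" unfolding \<sigma>_def by auto
  have sigc: "1 \<le> \<sigma> * c S1" using S1F unfolding \<sigma>_def by auto
  define c' where "c' = (\<lambda>T. if p \<in> T \<or> T = {} then 0 else c T + \<sigma> * c (sd T S1))"
  have c'nz: "c T \<noteq> 0 \<or> c (sd T S1) \<noteq> 0" "p \<notin> T" "T \<noteq> {}" if "c' T \<noteq> 0" for T
    using that unfolding c'_def by (auto split: if_splits)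
  have wf': "wfc V (2*R) c'"
    unfolding wfc_def
  proof (intro allI impI)
    fix T assume T: "c' T \<noteq> 0"
    have ne: "T \<noteq> {}" using c'nz[OF T] by simp
    have "T \<subseteq> V \<and> card T \<le> 2 * R"
    proof (cases "c T \<noteq> 0")
      case True thus ?thesis using wf unfolding wfc_def by force
    next
      case False
      hence c2: "c (sd T S1) \<noteq> 0" using c'nz[OF T] by simp
      hence sv: "sd T S1 \<subseteq> V" "card (sd T S1) \<le> R" using wf unfolding wfc_def by auto
      have sub: "T \<subseteq> sd T S1 \<union> S1" unfolding sd_def by auto
      hence TV: "T \<subseteq> V" using sv S1V by auto
      have "card T \<le> card (sd T S1 \<union> S1)"
        using sub sv S1V fin by (meson card_mono finite_UnI finite_subset)
      also have "\<dots> \<le> card (sd T S1) + card S1" by (rule card_Un_le)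
      finally show ?thesis using TV sv S1V by linarith
    qed
    thus "T \<subseteq> V \<and> T \<noteq> {} \<and> card T \<le> 2 * R" using ne by simp
  qed
  have gain: "\<forall>A'\<subseteq>V. \<exists>A\<subseteq>V. fv V c' A' + 1 \<le> fv V c A"
  proof (intro allI impI)
    fix A' assume A': "A' \<subseteq> V"
    define A where "A = (if chi S1 A' = \<sigma> then A' else sd A' {p})"
    have pV: "p \<in> V" using S1V S1F by auto
    have AV: "A \<subseteq> V" using A' pV unfolding A_def sd_def by auto
    have chiA: "chi S1 A = \<sigma>"
    proof (cases "chi S1 A' = \<sigma>")
      case False
      have "chi S1 {p} = -1" using S1F unfolding chi_def by (simp add: Int_absorb1)
      hence "chi S1 A = - chi S1 A'" unfolding A_def using False chi_sd2[OF finS1] by simp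
      thus ?thesis using False sig chi_pm[of S1 A'] by auto
    qed (simp add: A_def)
    have same: "fv V c' A = fv V c' A'"
      unfolding fv_def
    proof (rule sum.cong[OF refl])
      fix T assume "T \<in> Pow V"
      show "c' T * chi T A = c' T * chi T A'"
      proof (cases "c' T = 0")
        case False
        hence "p \<notin> T" using c'nz by blast
        hence "T \<inter> A = T \<inter> A'" unfolding A_def sd_def by auto
        thus ?thesis unfolding chi_def by simp
      qed simp
    qed
    have "fv V c A = \<sigma> * c S1 + fv V c' A"
      by (rule gain_part[OF fin wf S1V(1) S1F(2) sig c'_def AV chiA])
    thus "\<exists>A\<subseteq>V. fv V c' A' + 1 \<le> fv V c A" using same sigc AV by auto
  qed
  define L where "L = cov c - S1 - cov c'"
  have finL: "finite L" using covV fin unfolding L_def by (meson Diff_subset finite_subset)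
  have key: "sd S S1 \<in> F" if y: "y \<in> L" and S: "S \<in> F" "y \<in> S" for y S
  proof -
    have yS1: "y \<notin> S1" and yc': "\<forall>T. y \<in> T \<longrightarrow> c' T = 0"
      using y unfolding L_def cov_def by auto
    show ?thesis
    proof (cases "p \<in> S")
      case False
      have "c' S = 0" using yc' S by auto
      hence "c S + \<sigma> * c (sd S S1) = 0" using False S unfolding c'_def by (auto split: if_splits)
      thus ?thesis using S sig unfolding F_def by auto
    next
      case True
      have yT: "y \<in> sd S S1" "p \<notin> sd S S1" using True S yS1 S1F unfolding sd_def by auto
      hence "c' (sd S S1) = 0" using yc' by auto
      hence "c (sd S S1) + \<sigma> * c S = 0" using yT sd_sd[of S S1] unfolding c'_def
        by (auto split: if_splits)
      thus ?thesis using S sig unfolding F_def by auto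
    qed
  qed
  define Fy where "Fy y = {S\<in>F. y \<in> S}" for y
  have finFy: "finite (Fy y)" for y using finF unfolding Fy_def by simp
  have half: "card (Fy y) = 2 * card (Fy y \<inter> Fp)" if y: "y \<in> L" for y
  proof -
    have yS1: "y \<notin> S1" using y unfolding L_def by auto
    have bij: "bij_betw (\<lambda>S. sd S S1) (Fy y \<inter> Fp) (Fy y - Fp)"
    proof (rule bij_betw_byWitness[where f'="\<lambda>S. sd S S1"])
      show "\<forall>a\<in>Fy y \<inter> Fp. sd (sd a S1) S1 = a" by (simp add: sd_sd)
      show "\<forall>a'\<in>Fy y - Fp. sd (sd a' S1) S1 = a'" by (simp add: sd_sd)
      show "(\<lambda>S. sd S S1) ` (Fy y \<inter> Fp) \<subseteq> Fy y - Fp"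
        using key[OF y] yS1 S1F unfolding Fy_def Fp_def sd_def by auto
      show "(\<lambda>S. sd S S1) ` (Fy y - Fp) \<subseteq> Fy y \<inter> Fp"
        using key[OF y] yS1 S1F unfolding Fy_def Fp_def sd_def by auto
    qed
    have "card (Fy y) = card (Fy y \<inter> Fp) + card (Fy y - Fp)"
      using card_Int_Diff[OF finFy, of y Fp] by simp
    thus ?thesis using bij_betw_same_card[OF bij] by simp
  qed
  have degy: "deg p \<le> card (Fy y)" if "y \<in> L" for y
    using p(2) that unfolding L_def deg_def Fy_def by auto
  have dp: "deg p = card Fp" unfolding deg_def Fp_def by simp
  have dpos: "1 \<le> card Fp" using Fpne finFp by (simp add: Suc_le_eq card_gt_0_iff)
  have bnd: "2 * card (A \<inter> L) \<le> R" if A: "A \<in> Fp" for A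
  proof (cases "A \<inter> L = {}")
    case False
    then obtain y where y: "y \<in> A" "y \<in> L" by auto
    have AF: "A \<in> F" using A unfolding Fp_def by auto
    have sdF: "sd A S1 \<in> F" using key[OF y(2) AF y(1)] .
    hence cs: "card (sd A S1) \<le> R" using wf unfolding F_def wfc_def by auto
    have finA: "finite A" using AF FP fin by (meson PowD finite_subset subsetD)
    have "card (sd A S1) = card (A - S1) + card (S1 - A)"
      unfolding sd_def using finA finS1 by (intro card_Un_disjoint) auto
    moreover have "card A = card (A - S1) + card (A \<inter> S1)"
      using card_Int_Diff[OF finA, of S1] by simp
    moreover have "card S1 = card (S1 - A) + card (A \<inter> S1)"
      using card_Int_Diff[OF finS1, of A] by (simp add: Int_commute)
    moreover have "card A \<le> card S1" using S1(2) A by auto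
    moreover have "card (A \<inter> L) \<le> card (A - S1)"
      using finA by (intro card_mono) (auto simp: L_def)
    ultimately show ?thesis using cs by linarith
  qed simp
  have S1L: "S1 \<inter> L = {}" unfolding L_def by auto
  have dc: "(\<Sum>y\<in>L. card (Fy y \<inter> Fp)) = (\<Sum>A\<in>Fp. card (A \<inter> L))"
  proof -
    have "(\<Sum>y\<in>L. card (Fy y \<inter> Fp)) = (\<Sum>y\<in>L. \<Sum>A\<in>Fp. if y \<in> A then 1 else 0)"
    proof (rule sum.cong[OF refl])
      fix y assume "y \<in> L"
      have "Fy y \<inter> Fp = {A\<in>Fp. y \<in> A}" unfolding Fy_def Fp_def by auto
      thus "card (Fy y \<inter> Fp) = (\<Sum>A\<in>Fp. if y \<in> A then 1 else 0)"
        using finFp by (simp add: sum.If_cases Int_def)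
    qed
    also have "\<dots> = (\<Sum>A\<in>Fp. \<Sum>y\<in>L. if y \<in> A then 1 else 0)" by (rule sum.swap)
    also have "\<dots> = (\<Sum>A\<in>Fp. card (A \<inter> L))"
    proof (rule sum.cong[OF refl])
      fix A assume "A \<in> Fp"
      have "{y\<in>L. y \<in> A} = A \<inter> L" by auto
      thus "(\<Sum>y\<in>L. if y \<in> A then 1 else 0) = card (A \<inter> L)"
        using finL sum.If_cases[OF finL, of "\<lambda>y. y \<in> A" "\<lambda>_. 1::nat" "\<lambda>_. 0"]
        by (simp add: Int_commute)
    qed
    finally show ?thesis .
  qed
  have "card Fp * card L \<le> (\<Sum>y\<in>L. card (Fy y))"
    using degy dp sum_mono[of L "\<lambda>_. card Fp" "\<lambda>y. card (Fy y)"] by (simp add: mult.commute)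
  also have "\<dots> = 2 * (\<Sum>y\<in>L. card (Fy y \<inter> Fp))"
    using half by (simp add: sum_distrib_left)
  also have "\<dots> = (\<Sum>A\<in>Fp. 2 * card (A \<inter> L))" using dc by (simp add: sum_distrib_left)
  also have "\<dots> = (\<Sum>A\<in>Fp - {S1}. 2 * card (A \<inter> L))"
    using sum.remove[OF finFp S1(1), of "\<lambda>A. 2 * card (A \<inter> L)"] S1L by simp
  also have "\<dots> \<le> (\<Sum>A\<in>Fp - {S1}. R)" using bnd by (intro sum_mono) auto
  also have "\<dots> \<le> card Fp * R" using finFp by (simp add: card_Diff1_le)
  finally have "card Fp * card L \<le> card Fp * R" .
  hence cL: "card L \<le> R" using dpos by simp
  have sub: "cov c \<subseteq> S1 \<union> L \<union> cov c'" unfolding L_def by auto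
  have "card (cov c) \<le> card (S1 \<union> L \<union> cov c')"
  proof (rule card_mono[OF _ sub])
    have "cov c' \<subseteq> V" using wf' unfolding wfc_def cov_def by auto
    thus "finite (S1 \<union> L \<union> cov c')" using fin finS1 finL by (meson finite_UnI finite_subset)
  qed
  also have "\<dots> \<le> card S1 + card L + card (cov c')"
    by (meson add_le_mono card_Un_le le_refl order_trans)
  finally have "card (cov c) \<le> card (cov c') + 2 * R" using cL S1V by linarith
  thus ?thesis using wf' gain by blast
qed


lemma main_ind:
  assumes fin: "finite V"
  shows "wfc V R c \<Longrightarrow> 1 \<le> R \<Longrightarrow> 2^k * R < card (cov c) + 2*R \<Longrightarrow> \<exists>A\<subseteq>V. int k \<le> fv V c A"
proof (induction k arbitrary: R c)
  case 0
  then show ?case using mean_zero[OF fin] by auto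
next
  case (Suc k)
  have "2 * R \<le> 2^(Suc k) * R" using Suc.prems(2) by simp
  hence "cov c \<noteq> {}" using Suc.prems(3) by auto
  then obtain c' where c': "wfc V (2*R) c'" "card (cov c) \<le> card (cov c') + 2*R"
      "\<forall>A'\<subseteq>V. \<exists>A\<subseteq>V. fv V c' A' + 1 \<le> fv V c A"
    using step[OF fin Suc.prems(1)] by blast
  have "2^k * (2*R) < card (cov c') + 2*(2*R)" using Suc.prems(3) c'(2) by simp
  moreover have "1 \<le> 2 * R" using Suc.prems(2) by simp
  ultimately obtain A' where A': "A' \<subseteq> V" "int k \<le> fv V c' A'" using Suc.IH[OF c'(1)] by blast
  then obtain A where "A \<subseteq> V" "fv V c' A' + 1 \<le> fv V c A" using c'(3) by blast
  thus ?case using A' by (intro exI[of _ A]) auto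
qed


theorem lemma3:
  fixes r :: "nat \<Rightarrow> nat" and n m k :: nat
    and \<alpha> :: "nat \<Rightarrow> nat set" and b :: "nat \<Rightarrow> bool" and w :: "nat \<Rightarrow> nat"
  assumes "0 < n"
    and "lin2_instance r n m \<alpha> w"
    and "\<forall>j<m. \<forall>p<m. j \<noteq> p \<longrightarrow> \<alpha> j \<noteq> \<alpha> p"
    and "n \<ge> 2 ^ k * r n"
  shows "yes_instance m \<alpha> b w k"
proof -
  define V where "V = {1..n}"
  have fin: "finite V" unfolding V_def by simp
  have inst: "\<forall>j<m. \<alpha> j \<noteq> {} \<and> \<alpha> j \<subseteq> V \<and> card (\<alpha> j) \<le> r n \<and> 0 < w j"
    "\<forall>i\<in>V. \<exists>j<m. i \<in> \<alpha> j"
    using assms(2) unfolding lin2_instance_def V_def by auto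
  define s where "s j = (if b j then - int (w j) else int (w j))" for j
  define c where "c S = (\<Sum>j\<in>{j\<in>{..<m}. \<alpha> j = S}. s j)" for S
  have wf: "wfc V (r n) c"
    unfolding wfc_def
  proof (intro allI impI)
    fix S assume "c S \<noteq> 0"
    hence "{j\<in>{..<m}. \<alpha> j = S} \<noteq> {}" unfolding c_def by (metis sum.empty)
    then obtain j where "j < m" "\<alpha> j = S" by blast
    thus "S \<subseteq> V \<and> S \<noteq> {} \<and> card S \<le> r n" using inst(1) by auto
  qed
  have single: "c (\<alpha> j) = s j" if "j < m" for j
  proof -
    have "{j'\<in>{..<m}. \<alpha> j' = \<alpha> j} = {j}"
    proof (intro equalityI subsetI)
      fix x assume "x \<in> {j'\<in>{..<m}. \<alpha> j' = \<alpha> j}"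
      hence "x < m" "\<alpha> x = \<alpha> j" by auto
      thus "x \<in> {j}" using assms(3) that by blast
    qed (use that in simp)
    thus ?thesis unfolding c_def by simp
  qed
  have covV: "cov c = V"
  proof
    show "cov c \<subseteq> V" using wf unfolding wfc_def cov_def by auto
    show "V \<subseteq> cov c"
    proof
      fix i assume "i \<in> V"
      then obtain j where j: "j < m" "i \<in> \<alpha> j" using inst(2) by auto
      have "c (\<alpha> j) \<noteq> 0" using single[OF j(1)] inst(1) j(1) unfolding s_def by auto
      thus "i \<in> cov c" using j unfolding cov_def by auto
    qed
  qed
  have cardV: "card V = n" unfolding V_def by simp
  have r1: "1 \<le> r n"
  proof -
    have "1 \<in> V" using assms(1) unfolding V_def by auto
    then obtain j where j: "j < m" "1 \<in> \<alpha> j" using inst(2) by auto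
    have "finite (\<alpha> j)" using inst(1) j(1) fin finite_subset by blast
    hence "1 \<le> card (\<alpha> j)" using j(2) by (metis card_0_eq empty_iff less_one not_le)
    thus ?thesis using inst(1) j(1) by auto
  qed
  have "2 ^ k * r n < card (cov c) + 2 * r n" using assms(4) covV cardV r1 by simp
  then obtain A where A: "A \<subseteq> V" "int k \<le> fv V c A"
    using main_ind[OF fin wf r1] by blast
  define z where "z i = (i \<in> A)" for i
  have "fv V c A = (\<Sum>S\<in>Pow V. \<Sum>j\<in>{j\<in>{..<m}. \<alpha> j = S}. s j * chi (\<alpha> j) A)"
    unfolding fv_def c_def by (simp add: sum_distrib_right)
  also have "\<dots> = (\<Sum>j<m. s j * chi (\<alpha> j) A)"
    by (rule sum.group) (use fin inst(1) in auto)
  also have "\<dots> = (\<Sum>j<m. if eq_sat z (\<alpha> j) (b j) then int (w j) else - int (w j))"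
  proof (rule sum.cong[OF refl])
    fix j assume "j \<in> {..<m}"
    have e: "{i \<in> \<alpha> j. z i} = \<alpha> j \<inter> A" unfolding z_def by auto
    show "s j * chi (\<alpha> j) A = (if eq_sat z (\<alpha> j) (b j) then int (w j) else - int (w j))"
      unfolding s_def chi_def eq_sat_def e
      by (cases "even (card (\<alpha> j \<inter> A))") auto
  qed
  also have "\<dots> = 2 * int (sat_weight m \<alpha> b w z) - int (\<Sum>j<m. w j)"
  proof -
    define P where "P = {j. j < m \<and> eq_sat z (\<alpha> j) (b j)}"
    have PQ: "{..<m} \<inter> {j. eq_sat z (\<alpha> j) (b j)} = P" unfolding P_def by auto
    have PQ2: "{..<m} \<inter> - {j. eq_sat z (\<alpha> j) (b j)} = {..<m} - P" unfolding P_def by auto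
    have "(\<Sum>j<m. if eq_sat z (\<alpha> j) (b j) then int (w j) else - int (w j))
        = (\<Sum>j\<in>P. int (w j)) - (\<Sum>j\<in>{..<m} - P. int (w j))"
      using sum.If_cases[of "{..<m}" "\<lambda>j. eq_sat z (\<alpha> j) (b j)" "\<lambda>j. int (w j)" "\<lambda>j. - int (w j)"]
      by (simp add: PQ PQ2 sum_negf)
    moreover have "(\<Sum>j<m. int (w j)) = (\<Sum>j\<in>P. int (w j)) + (\<Sum>j\<in>{..<m} - P. int (w j))"
      by (metis (no_types, lifting) P_def finite_lessThan lessThan_iff mem_Collect_eq subsetI
          sum.subset_diff add.commute)
    ultimately show ?thesis unfolding sat_weight_def P_def[symmetric]
      by (simp add: of_nat_sum)
  qed
  finally have "int k \<le> 2 * int (sat_weight m \<alpha> b w z) - int (\<Sum>j<m. w j)" using A by simp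
  hence "real k \<le> 2 * real (sat_weight m \<alpha> b w z) - real (\<Sum>j<m. w j)" by linarith
  hence "(real (\<Sum>j<m. w j) + real k) / 2 \<le> real (sat_weight m \<alpha> b w z)" by simp
  thus ?thesis unfolding yes_instance_def by blast
qed

end
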